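(* For any $a\in(0,1)$ and any $x\in(\frac12,1]$, there exists $\boldsymbol{\mu}=(\mu_1,\mu_2)\in\Lambda$ such that (i) $\mu_1>\mu_2$ and $\mu_1+\mu_2\ge 1$, (ii) $\lambda(x,\boldsymbol{\mu})=a$, and (iii) $x^\star(\boldsymbol{\mu})<\left(\frac12+x\right)/2$.
   Context: Two-armed bandit with Bernoulli rewards; an instance is $\boldsymbol{\mu}=(\mu_1,\mu_2)$, the means of the two arms, and $\Lambda=\{\boldsymbol{\mu}\in(0,1)^2:\mu_1\neq\mu_2\}$. For $p,q\in(0,1)$ let $d(p,q)=p\log\frac{p}{q}+(1-p)\log\frac{1-p}{1-q}$ be the Bernoulli Kullback–Leibler divergence. For $x\in[0,1]$ define $g(x,\boldsymbol{\mu})=\inf_{\lambda\in(0,1)}\big[(1-x)d(\lambda,\mu_1)+x\,d(\lambda,\mu_2)\big]$; equivalently $g(x,\boldsymbol{\mu})=-\log\big((1-\mu_1)^{1-x}(1-\mu_2)^x+\mu_1^{1-x}\mu_2^x\big)$. Let $\lambda(x,\boldsymbol{\mu})$ be the minimizer $\lambda$ in this infimum, and $x^\star(\boldsymbol{\mu})=\arg\max_{x\in(0,1)}g(x,\boldsymbol{\mu})$. *)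

theory Defs
  imports "HOL-Analysis.Analysis"
begin

definition kl :: "real \<Rightarrow> real \<Rightarrow> real" where
  "kl p q = p * ln (p / q) + (1 - p) * ln ((1 - p) / (1 - q))"

definition Lambda :: "(real \<times> real) set" where
  "Lambda = {mu. 0 < fst mu \<and> fst mu < 1 \<and> 0 < snd mu \<and> snd mu < 1 \<and> fst mu \<noteq> snd mu}"

definition gobj :: "real \<Rightarrow> real \<times> real \<Rightarrow> real \<Rightarrow> real" where
  "gobj x mu l = (1 - x) * kl l (fst mu) + x * kl l (snd mu)"

definition g :: "real \<Rightarrow> real \<times> real \<Rightarrow> real" where
  "g x mu = (INF l\<in>{0<..<1}. gobj x mu l)"

definition lam :: "real \<Rightarrow> real \<times> real \<Rightarrow> real" where
  "lam x mu = (THE l. l \<in> {0<..<1} \<and> (\<forall>l'\<in>{0<..<1}. gobj x mu l \<le> gobj x mu l'))"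

definition xstar :: "real \<times> real \<Rightarrow> real" where
  "xstar mu = (THE x. x \<in> {0<..<1} \<and> (\<forall>y\<in>{0<..<1}. g y mu \<le> g x mu))"

end

theory Submission
  imports Defs
begin

lemma exp_gt_lin: fixes t :: real assumes "t \<noteq> 0" shows "1 + t < exp t"
proof (cases "1 + t/2 \<ge> 0")
  case True
  have "exp t = exp (t/2) * exp (t/2)" by (simp flip: exp_add)
  also have "\<dots> \<ge> (1 + t/2) * (1 + t/2)"
    using True exp_ge_add_one_self[of "t/2"] by (intro mult_mono) auto
  finally have "exp t \<ge> 1 + t + t^2/4" by (simp add: algebra_simps power2_eq_square)
  moreover have "t^2 > 0" using assms by simp
  ultimately show ?thesis by linarith
next
  case False
  then have "1 + t < 0" by linarith
  then show ?thesis using exp_gt_zero[of t] by linarith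
qed

lemma ln_lt_lin: fixes z :: real assumes "0 < z" "z \<noteq> 1" shows "ln z < z - 1"
proof -
  have "ln z \<noteq> 0" using assms by simp
  from exp_gt_lin[OF this] show ?thesis using assms by simp
qed

lemma kl_pos: fixes l m :: real
  assumes "0<l" "l<1" "0<m" "m<1" "l \<noteq> m" shows "kl l m > 0"
proof -
  have "m/l \<noteq> 1" using assms by auto
  then have 1: "ln (m/l) < m/l - 1" using assms by (intro ln_lt_lin) auto
  have 2: "ln ((1-m)/(1-l)) \<le> (1-m)/(1-l) - 1" using assms by (intro ln_le_minus_one) auto
  have "ln (l/m) = - ln (m/l)" using assms by (simp add: ln_div)
  moreover have "ln ((1-l)/(1-m)) = - ln ((1-m)/(1-l))" using assms by (simp add: ln_div)
  moreover have "l * ln (m/l) < l * (m/l - 1)" using 1 assms by simp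
  moreover have "(1-l) * ln ((1-m)/(1-l)) \<le> (1-l) * ((1-m)/(1-l) - 1)" using 2 assms by (intro mult_left_mono) auto
  moreover have "l * (m/l - 1) + (1-l) * ((1-m)/(1-l) - 1) = 0" using assms by (simp add: field_simps)
  ultimately show ?thesis unfolding kl_def by (simp only:)
qed

lemma kl_self: "kl l l = 0" by (simp add: kl_def)

definition Pf :: "real \<Rightarrow> real \<Rightarrow> real \<Rightarrow> real" where
  "Pf y p q = p powr (1-y) * q powr y"
definition Qf :: "real \<Rightarrow> real \<Rightarrow> real \<Rightarrow> real" where
  "Qf y p q = (1-p) powr (1-y) * (1-q) powr y"
definition lamf where "lamf y p q = Pf y p q / (Pf y p q + Qf y p q)"

lemma PQ_pos: assumes "0<p" "p<1" "0<q" "q<1" shows "Pf y p q > 0" "Qf y p q > 0"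
  using assms by (auto simp: Pf_def Qf_def)

lemma lamf_in: assumes "0<p" "p<1" "0<q" "q<1" shows "0 < lamf y p q" "lamf y p q < 1"
  using PQ_pos[OF assms, of y] by (auto simp: lamf_def field_simps)

lemma gobj_decomp:
  assumes "0<p" "p<1" "0<q" "q<1" "0<l" "l<1"
  shows "gobj y (p,q) l = kl l (lamf y p q) - ln (Pf y p q + Qf y p q)"
proof -
  define P where "P = Pf y p q"
  define Q where "Q = Qf y p q"
  have P: "P > 0" "Q > 0" using PQ_pos[OF assms(1-4)] by (auto simp: P_def Q_def)
  have lP: "ln P = (1-y) * ln p + y * ln q" using assms unfolding P_def Pf_def
    by (simp add: ln_mult ln_powr)
  have lQ: "ln Q = (1-y) * ln (1-p) + y * ln (1-q)" using assms unfolding Q_def Qf_def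
    by (simp add: ln_mult ln_powr)
  have lam1: "1 - lamf y p q = Q / (P + Q)" using P unfolding lamf_def P_def[symmetric] Q_def[symmetric]
    by (simp add: field_simps)
  have e1: "ln (l / lamf y p q) = ln l - ln P + ln (P+Q)"
    using P assms unfolding lamf_def P_def[symmetric] Q_def[symmetric] by (simp add: ln_div ln_mult)
  have e2: "ln ((1-l) / (1 - lamf y p q)) = ln (1-l) - ln Q + ln (P+Q)"
    using P assms unfolding lam1 by (simp add: ln_div ln_mult)
  show ?thesis
    unfolding gobj_def kl_def fst_conv snd_conv e2 e1 P_def[symmetric] Q_def[symmetric] lP lQ
    using assms by (simp add: ln_div algebra_simps)
qed

lemma lam_eq: assumes "0<p" "p<1" "0<q" "q<1" shows "lam y (p,q) = lamf y p q"
  unfolding lam_def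
proof (rule the_equality)
  show "lamf y p q \<in> {0<..<1} \<and> (\<forall>l'\<in>{0<..<1}. gobj y (p,q) (lamf y p q) \<le> gobj y (p,q) l')"
    using lamf_in[OF assms] gobj_decomp[OF assms] kl_self kl_pos[of _ "lamf y p q"]
    by (auto simp: less_imp_le) (smt (verit) kl_pos lamf_in[OF assms])
next
  fix l assume l: "l \<in> {0<..<1} \<and> (\<forall>l'\<in>{0<..<1}. gobj y (p,q) l \<le> gobj y (p,q) l')"
  then have "gobj y (p,q) l \<le> gobj y (p,q) (lamf y p q)" using lamf_in[OF assms] by auto
  then have "kl l (lamf y p q) \<le> 0" using gobj_decomp[OF assms] l lamf_in[OF assms] kl_self by auto
  then show "l = lamf y p q" using kl_pos[of l "lamf y p q"] l lamf_in[OF assms] by force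
qed

lemma g_eq: assumes "0<p" "p<1" "0<q" "q<1" shows "g y (p,q) = - ln (Pf y p q + Qf y p q)"
  unfolding g_def
proof (rule cInf_eq_minimum)
  show "- ln (Pf y p q + Qf y p q) \<in> gobj y (p, q) ` {0<..<1}"
    using lamf_in[OF assms] gobj_decomp[OF assms] kl_self
    by (auto intro!: image_eqI[where x="lamf y p q"])
next
  fix z assume "z \<in> gobj y (p, q) ` {0<..<1}"
  then obtain l where "l \<in> {0<..<1}" "z = gobj y (p,q) l" by auto
  then show "- ln (Pf y p q + Qf y p q) \<le> z"
    using gobj_decomp[OF assms] kl_pos[of l "lamf y p q"] lamf_in[OF assms] kl_self
    by (cases "l = lamf y p q") (auto simp: less_imp_le)
qed

lemma S_exp: assumes "0<p" "p<1" "0<q" "q<1"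
  shows "Pf y p q + Qf y p q = (1-p) * exp ((ln (1-q) - ln (1-p)) * y) + p * exp (- ((ln p - ln q) * y))"
proof -
  have "Pf y p q = exp ((1-y) * ln p + y * ln q)" using assms
    by (simp add: Pf_def powr_def exp_add)
  also have "\<dots> = exp (ln p) * exp (- ((ln p - ln q) * y))" by (simp flip: exp_add add: algebra_simps)
  also have "\<dots> = p * exp (- ((ln p - ln q) * y))" using assms by simp
  finally have 1: "Pf y p q = \<dots>" .
  have "Qf y p q = exp ((1-y) * ln (1-p) + y * ln (1-q))" using assms
    by (simp add: Qf_def powr_def exp_add)
  also have "\<dots> = exp (ln (1-p)) * exp ((ln (1-q) - ln (1-p)) * y)" by (simp flip: exp_add add: algebra_simps)
  also have "\<dots> = (1-p) * exp ((ln (1-q) - ln (1-p)) * y)" using assms by simp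
  finally show ?thesis using 1 by simp
qed

lemma S_min:
  fixes A C al be y0 y :: real
  assumes "A > 0" "C > 0" "al \<noteq> 0" "A * al * exp (al * y0) - C * be * exp (- (be * y0)) = 0" "y \<noteq> y0"
  shows "A * exp (al * y) + C * exp (- (be * y)) > A * exp (al * y0) + C * exp (- (be * y0))"
proof -
  have "exp (al * y) = exp (al * y0) * exp (al * (y - y0))" by (simp flip: exp_add add: algebra_simps)
  also have "\<dots> > exp (al * y0) * (1 + al * (y - y0))"
    using exp_gt_lin[of "al * (y - y0)"] assms by simp
  finally have 1: "A * exp (al * y) > A * exp (al * y0) * (1 + al * (y - y0))" using assms by simp
  have "exp (- (be * y)) = exp (- (be * y0)) * exp (- (be * (y - y0)))" by (simp flip: exp_add add: algebra_simps)
  also have "\<dots> \<ge> exp (- (be * y0)) * (1 - be * (y - y0))"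
    using exp_ge_add_one_self[of "- (be * (y - y0))"] by (intro mult_left_mono) auto
  finally have 2: "C * exp (- (be * y)) \<ge> C * exp (- (be * y0)) * (1 - be * (y - y0))" using assms by simp
  have "A * exp (al * y0) * (1 + al * (y - y0)) + C * exp (- (be * y0)) * (1 - be * (y - y0))
     = A * exp (al * y0) + C * exp (- (be * y0)) + (y - y0) * (A * al * exp (al * y0) - C * be * exp (- (be * y0)))"
    by (simp add: algebra_simps)
  with 1 2 assms(4) show ?thesis by simp
qed

lemma xstar_lt:
  fixes p q c :: real
  defines "al \<equiv> ln (1-q) - ln (1-p)" and "be \<equiv> ln p - ln q"
  assumes "0<p" "p<1" "0<q" "q<1" "p \<noteq> q" "0 < c" "c < 1"
    and Tc: "(1-p) * al * exp (al * c) - p * be * exp (- (be * c)) > 0"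
  shows "xstar (p,q) < c"
proof -
  define T where "T y = (1-p) * al * exp (al * y) - p * be * exp (- (be * y))" for y
  have "T 0 = - kl p q" unfolding T_def kl_def al_def be_def using assms
    by (simp add: ln_div algebra_simps)
  then have T0: "T 0 < 0" using kl_pos[of p q] assms by simp
  have "continuous_on {0..c} T" unfolding T_def by (intro continuous_intros)
  then obtain y0 where y0: "0 \<le> y0" "y0 \<le> c" "T y0 = 0"
    using IVT'[of T 0 0 c] T0 Tc assms unfolding T_def by force
  have y0': "0 < y0" "y0 < c" using y0 T0 Tc unfolding T_def by (auto simp: order.order_iff_strict)
  have alnz: "al \<noteq> 0" unfolding al_def using assms by auto
  have Smin: "Pf y p q + Qf y p q > Pf y0 p q + Qf y0 p q" if "y \<noteq> y0" for y
    unfolding S_exp[OF assms(3-6)] al_def[symmetric] be_def[symmetric]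
    using S_min[of "1-p" p al y0 be y] assms alnz y0(3) that unfolding T_def by (simp add: add.commute)
  have SP: "Pf y p q + Qf y p q > 0" for y using PQ_pos[OF assms(3-6)] by (simp add: add_pos_pos)
  have "xstar (p,q) = y0" unfolding xstar_def
  proof (rule the_equality)
    show "y0 \<in> {0<..<1} \<and> (\<forall>y\<in>{0<..<1}. g y (p, q) \<le> g y0 (p, q))"
      using y0' assms Smin SP unfolding g_eq[OF assms(3-6)]
      by (auto simp: less_imp_le) (metis less_eq_real_def ln_less_cancel_iff SP)
  next
    fix z assume z: "z \<in> {0<..<1} \<and> (\<forall>y\<in>{0<..<1}. g y (p, q) \<le> g z (p, q))"
    show "z = y0"
    proof (rule ccontr)
      assume "z \<noteq> y0"
      then have "ln (Pf z p q + Qf z p q) > ln (Pf y0 p q + Qf y0 p q)" using Smin SP by simp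
      moreover have "g y0 (p,q) \<le> g z (p,q)" using z y0' assms by auto
      ultimately show False unfolding g_eq[OF assms(3-6)] by simp
    qed
  qed
  then show ?thesis using y0' by simp
qed

definition sig :: "real \<Rightarrow> real" where "sig t = exp t / (1 + exp t)"
definition sp :: "real \<Rightarrow> real" where "sp t = ln (1 + exp t)"

lemma sig_bounds: "0 < sig t" "sig t < 1" by (auto simp: sig_def add_pos_pos)
lemma one_minus_sig: "1 - sig t = 1 / (1 + exp t)"
proof -
  have h: "1 + exp t \<noteq> 0" by (smt (verit) exp_gt_zero)
  show ?thesis unfolding sig_def using h by (simp add: field_simps)
qed
lemma ln_sig: "ln (sig t) = t - sp t"
proof -
  have h: "1 + exp t \<noteq> 0" by (smt (verit) exp_gt_zero)
  show ?thesis unfolding sig_def sp_def using h by (simp add: ln_div add_pos_pos)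
qed
lemma ln_one_minus_sig: "ln (1 - sig t) = - sp t"
  unfolding one_minus_sig sp_def by (simp add: ln_div add_pos_pos)
lemma sig_mono: assumes "v < u" shows "sig v < sig u"
proof -
  have "exp v < exp u" using assms by simp
  then have "exp v * (1 + exp u) < exp u * (1 + exp v)" by (simp add: algebra_simps)
  then show ?thesis unfolding sig_def
    by (simp add: divide_simps add_pos_pos)
qed
lemma sig_minus: "sig (- t) = 1 - sig t"
proof -
  have h: "1 + exp t \<noteq> 0" by (smt (verit) exp_gt_zero)
  show ?thesis unfolding one_minus_sig sig_def using h by (simp add: exp_minus field_simps)
qed

lemma conclude:
  fixes a x u v :: real
  defines "c \<equiv> (1/2 + x) / 2"
  assumes a: "0 < a" "a < 1" and x: "1/2 < x" "x \<le> 1"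
    and uv: "v < u" "0 \<le> u + v" and L: "(1 - x) * u + x * v = ln (a / (1 - a))"
    and K: "sp u - sp v > (u - v) * sig (u - c * (u - v))"
  shows "\<exists>mu \<in> Lambda. (fst mu > snd mu \<and> fst mu + snd mu \<ge> 1)
           \<and> lam x mu = a
           \<and> xstar mu < (1/2 + x) / 2"
proof (intro bexI conjI)
  define p where "p = sig u"
  define q where "q = sig v"
  have pq: "0<p" "p<1" "0<q" "q<1" using sig_bounds by (auto simp: p_def q_def)
  have qp: "q < p" unfolding p_def q_def using sig_mono uv by simp
  show "(p,q) \<in> Lambda" using pq qp by (auto simp: Lambda_def)
  show "fst (p,q) > snd (p,q)" using qp by simp
  have "sig (-u) \<le> sig v" using sig_mono[of "-u" v] uv by (cases "-u = v") auto
  then show "fst (p,q) + snd (p,q) \<ge> 1" unfolding sig_minus p_def q_def by simp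
  have P: "Pf x p q = exp ((1-x) * (u - sp u) + x * (v - sp v))"
    using pq by (simp add: Pf_def powr_def exp_add p_def q_def ln_sig)
  have Q: "Qf x p q = exp ((1-x) * (- sp u) + x * (- sp v))"
    using pq by (simp add: Qf_def powr_def exp_add p_def q_def ln_one_minus_sig) (simp add: mult_exp_exp)
  have "Pf x p q = exp ((1 - x) * u + x * v) * Qf x p q" unfolding P Q
    by (simp flip: exp_add add: algebra_simps)
  also have "exp ((1 - x) * u + x * v) = a / (1-a)" using L a by simp
  finally have PQ: "Pf x p q = a / (1-a) * Qf x p q" .
  have Qp: "Qf x p q > 0" using PQ_pos[OF pq] by simp
  have "lamf x p q = a" unfolding lamf_def PQ using a Qp by (simp add: field_simps)
  then show "lam x (p,q) = a" using lam_eq[OF pq] by simp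
  define d where "d = u - v"
  define al where "al = ln (1-q) - ln (1-p)"
  define be where "be = ln p - ln q"
  have al: "al = sp u - sp v" unfolding al_def p_def q_def ln_one_minus_sig by simp
  have be: "be = d - al" unfolding be_def al d_def p_def q_def ln_sig by simp
  have sigc: "sig (u - c * d) = exp u / (exp (c*d) + exp u)"
    unfolding sig_def exp_diff by (simp add: field_simps add_pos_pos)
  have "al > d * (exp u / (exp (c*d) + exp u))" using K unfolding al d_def[symmetric] sigc .
  then have "al * (exp (c*d) + exp u) > d * exp u"
    by (simp add: field_simps add_pos_pos)
  then have k1: "al * exp (c*d) > exp u * be" unfolding be by (simp add: algebra_simps)
  have "exp (al * c) * exp (be * c) = exp (c*d)" unfolding be by (simp flip: exp_add add: algebra_simps)
  then have "al * exp (al * c) * exp (be * c) > exp u * be" using k1 by (simp add: mult.assoc)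
  then have "al * exp (al * c) > exp u * be * exp (- (be * c))"
    by (simp add: exp_minus field_simps)
  then have "(al * exp (al * c)) / (1 + exp u) > (exp u * be * exp (- (be * c))) / (1 + exp u)"
    by (intro divide_strict_right_mono) (auto simp: add_pos_pos)
  moreover have e1: "1 - p = 1 / (1 + exp u)" unfolding p_def one_minus_sig by simp
  moreover have e2: "p = exp u / (1 + exp u)" unfolding p_def sig_def by simp
  moreover have "(1-p) * al * exp (al * c) = (al * exp (al * c)) / (1 + exp u)" unfolding e1 by simp
  moreover have "p * be * exp (- (be * c)) = (exp u * be * exp (- (be * c))) / (1 + exp u)" unfolding e2 by simp
  ultimately have Tc: "(1-p) * al * exp (al * c) - p * be * exp (- (be * c)) > 0"
    by linarith
  have "0 < c" "c < 1" using x by (auto simp: c_def)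
  from xstar_lt[OF pq _ this, unfolded al_def[symmetric] be_def[symmetric], OF _ Tc] qp
  show "xstar (p,q) < (1/2 + x) / 2" unfolding c_def by simp
qed

definition dsig :: "real \<Rightarrow> real" where "dsig t = exp t / (1 + exp t)^2"

lemma onep: "1 + exp (t::real) > 0" by (smt (verit) exp_gt_zero)

lemma sp_deriv: "DERIV sp t :> sig t"
  unfolding sp_def sig_def using onep[of t]
  by (auto intro!: derivative_eq_intros)

lemma sig_deriv: "DERIV sig t :> dsig t"
  unfolding sig_def dsig_def using onep[of t]
  by (auto intro!: derivative_eq_intros simp: field_simps power2_eq_square)

lemma dsig_deriv: "DERIV dsig t :> (exp t * (1 + exp t)^2 - (2 * (1 + exp t) * exp t) * exp t) / ((1 + exp t)^2)^2"
proof -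
  have g: "DERIV (\<lambda>y. (1 + exp y)^2) t :> 2 * (1 + exp t) * exp t"
    by (auto intro!: derivative_eq_intros)
  have "(1 + exp t)^2 \<noteq> 0" using onep[of t] by simp
  from DERIV_quotient[OF DERIV_exp g this] show ?thesis unfolding dsig_def[abs_def] by simp
qed

lemma sp_has[derivative_intros]: "(f has_real_derivative f') (at t within S) \<Longrightarrow>
  ((\<lambda>t. sp (f t)) has_real_derivative sig (f t) * f') (at t within S)"
  by (rule DERIV_chain2[OF sp_deriv])
lemma sig_has[derivative_intros]: "(f has_real_derivative f') (at t within S) \<Longrightarrow>
  ((\<lambda>t. sig (f t)) has_real_derivative dsig (f t) * f') (at t within S)"
  by (rule DERIV_chain2[OF sig_deriv])
lemma dsig_has[derivative_intros]: "(f has_real_derivative f') (at t within S) \<Longrightarrow>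
  ((\<lambda>t. dsig (f t)) has_real_derivative ((exp (f t) * (1 + exp (f t))^2 - (2 * (1 + exp (f t)) * exp (f t)) * exp (f t)) / ((1 + exp (f t))^2)^2) * f') (at t within S)"
  by (rule DERIV_chain2[OF dsig_deriv])

lemma dsig_pos: "dsig t > 0" unfolding dsig_def using onep[of t] by simp

lemma H_pos:
  fixes L x k :: real
  assumes "1/2 < x" "k = x/2 - 1/4"
  shows "\<exists>d>0. sp (L + x*d) - sp (L - (1-x)*d) - d * sig (L + k*d) > 0"
proof -
  define H where "H d = sp (L + x*d) - sp (L - (1-x)*d) - d * sig (L + k*d)" for d
  define H1 where "H1 d = x * sig (L + x*d) + (1-x) * sig (L - (1-x)*d) - sig (L + k*d) - k*d*dsig (L + k*d)" for d
  have dH: "DERIV H d :> H1 d" for d unfolding H_def H1_def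
    by (auto intro!: derivative_eq_intros simp: algebra_simps)
  have dH1: "DERIV H1 0 :> (x - 1/2) * dsig L" unfolding H1_def
    by (rule derivative_eq_intros refl)+ (simp add: assms(2) algebra_simps power2_eq_square)
  have "(x - 1/2) * dsig L > 0" using assms dsig_pos by simp
  from DERIV_pos_inc_right[OF dH1 this] obtain dd where dd: "dd > 0" "\<forall>h>0. h < dd \<longrightarrow> H1 0 < H1 (0 + h)" by blast
  have H10: "H1 0 = 0" unfolding H1_def by (simp add: algebra_simps)
  define d where "d = dd/2"
  have d: "0 < d" "d < dd" using dd by (auto simp: d_def)
  obtain z where z: "0 < z" "z < d" "H d - H 0 = (d - 0) * H1 z" using MVT2[OF d(1), of H H1] dH by blast
  have "H1 z > 0" using dd z d H10 by force
  moreover have "H 0 = 0" unfolding H_def by simp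
  ultimately have "H d > 0" using z d by simp
  then show ?thesis using d unfolding H_def by blast
qed

lemma sp_sym: "sp u - sp (- u) = u"
proof -
  have "1 + exp u = exp u * (1 + exp (- u))" by (simp add: exp_minus field_simps)
  then have "sp u = u + sp (- u)" unfolding sp_def using onep[of "-u"] by (simp add: ln_mult)
  then show ?thesis by simp
qed

theorem mainTheorem1:
  fixes a x :: real
  assumes "0 < a" "a < 1" "1/2 < x" "x \<le> 1"
  shows "\<exists>mu \<in> Lambda. (fst mu > snd mu \<and> fst mu + snd mu \<ge> 1)
           \<and> lam x mu = a
           \<and> xstar mu < (1/2 + x) / 2"
proof -
  define L where "L = ln (a / (1 - a))"
  define c where "c = (1/2 + x) / 2"
  show ?thesis
  proof (cases "L < 0")
    case True
    define u where "u = L / (1 - 2*x)"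
    have u: "u > 0" unfolding u_def using True assms by (simp add: divide_neg_neg)
    have nz: "1 - 2*x \<noteq> 0" using assms by simp
    have "(1 - x) * u + x * (- u) = (1 - 2*x) * u" by (simp add: algebra_simps)
    also have "\<dots> = L" unfolding u_def using nz by simp
    finally have L: "(1 - x) * u + x * (- u) = L" .
    have "u * (1 - 2*c) < 0" using u assms by (simp add: c_def mult_pos_neg)
    then have "exp (u * (1 - 2*c)) < 1" by simp
    then have "sig (u * (1 - 2*c)) < 1/2" unfolding sig_def using onep[of "u * (1 - 2*c)"] by (simp add: field_simps)
    moreover have "u - c * (u - - u) = u * (1 - 2*c)" by (simp add: algebra_simps)
    ultimately have "sp u - sp (- u) > (u - - u) * sig (u - c * (u - - u))"
      unfolding sp_sym using u by simp
    moreover have "- u < u" "0 \<le> u + - u" using u by auto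
    ultimately show ?thesis using conclude[of a x "-u" u] assms L unfolding L_def c_def by blast
  next
    case False
    define k where "k = x/2 - 1/4"
    obtain d where d: "d > 0" "sp (L + x*d) - sp (L - (1-x)*d) - d * sig (L + k*d) > 0"
      using H_pos[of x k L] assms k_def by blast
    define u where "u = L + x*d"
    define v where "v = L - (1-x)*d"
    have "u - v = d" unfolding u_def v_def by (simp add: algebra_simps)
    then have uv1: "v < u" using d by simp
    have "(2*x - 1) * d > 0" using d assms by (intro mult_pos_pos) auto
    moreover have "u + v = 2 * L + (2*x - 1) * d" unfolding u_def v_def by (simp add: algebra_simps)
    ultimately have uv2: "0 \<le> u + v" using False by simp
    have L: "(1 - x) * u + x * v = L" unfolding u_def v_def by (simp add: algebra_simps)
    have "u - c * (u - v) = L + k*d" "u - v = d" unfolding u_def v_def c_def k_def by (simp_all add: field_simps)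
    then have "sp u - sp v > (u - v) * sig (u - c * (u - v))" using d unfolding u_def[symmetric] v_def[symmetric] by simp
    then show ?thesis using conclude[of a x v u] assms uv1 uv2 L unfolding L_def c_def by blast
  qed
qed

end
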